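(* Assume $q\equiv1\pmod 4$. Then $S^{(2)}(\beta)=0$ if and only if \[ \begin{cases} 2K(\chi)-(1-\zeta_4)K(\eta_{1/4}\chi)-(1+\zeta_4)K(\eta_{3/4}\chi)\equiv0 \pmod{8\mathcal{P}\,\mathbb{Z}[\zeta_{4k}]} & \text{if } q\equiv1\pmod 8,\\ 4+2K(\chi)+(1-\zeta_4)K(\eta_{1/4}\chi)+(1+\zeta_4)K(\eta_{3/4}\chi)\equiv0 \pmod{8\mathcal{P}\,\mathbb{Z}[\zeta_{4k}]} & \text{if } q\equiv5\pmod 8. \end{cases} \]
   Context: Let $p$ be an odd prime, $m\ge1$, $q=p^m$, $\alpha$ a primitive element of $\mathbb{F}_q$, and $T=q-1$. The binary SLCE sequence $(s_n)_{n\ge0}$ is defined as follows: $s_n=1$ if $\alpha^n+1$ is a nonzero non-square of $\mathbb{F}_q$, and $s_n=0$ otherwise. Put $S(X)=\sum_{n=0}^{T-1}s_nX^n\in\mathbb{F}_2[X]$. For an integer $t\ge0$, the $t$-th Hasse derivative is $S^{(t)}(X)=\sum_{n=t}^{T-1}\binom{n}{t}s_nX^{n-t}$, with coefficients reduced mod $2$. Let $\beta$ be an element of an algebraic closure of $\mathbb{F}_2$ with $\beta^T=1$ and multiplicative order $k>1$ (so $k$ is odd). Let $f$ be the order of $2$ modulo $k$, and write $\zeta_N=e^{2\pi i/N}$. Let $\mathcal{P}$ be a prime ideal of $\mathbb{Z}[\zeta_k]$ containing $2$. Fix a field isomorphism $\phi:\mathbb{F}_2(\beta)=\mathbb{F}_{2^f}\to\mathbb{Z}[\zeta_k]/\mathcal{P}$,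 and let $\zeta$ be the unique complex $k$-th root of unity with $\phi(\beta)=\zeta+\mathcal{P}$. Multiplicative characters of $\mathbb{F}_q$ are homomorphisms $\mathbb{F}_q^*\to\mathbb{C}^*$, extended by value $0$ at $0$. For a rational $j$ with $(q-1)j\in\mathbb{Z}$, $\eta_j$ is the character with $\eta_j(\alpha)=e^{2\pi ij}$. Let $\rho=\eta_{1/2}$ be the quadratic character. Let $\chi$ be the character with $\chi(\alpha^n)=\zeta^n$. For a character $\psi$, set $K(\psi)=\sum_{x\in\mathbb{F}_q}\rho(x)\psi(1-x)$. For an ideal $I$ of $\mathbb{Z}[\zeta_k]$, $I\,\mathbb{Z}[\zeta_{4k}]$ is the ideal it generates in $\mathbb{Z}[\zeta_{4k}]$. *)

theory Defs
  imports Complex_Main "HOL-Computational_Algebra.Polynomial" "HOL-Algebra.QuotRing"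
begin

definition zeta :: "nat \<Rightarrow> complex" where
  "zeta N = exp (2 * pi * \<i> / of_nat N)"

definition Zzeta :: "nat \<Rightarrow> complex set" where
  "Zzeta N = {x. \<exists>g :: int poly. x = poly (map_poly of_int g) (zeta N)}"

definition Zzeta_ring :: "nat \<Rightarrow> complex ring" where
  "Zzeta_ring N = \<lparr>carrier = Zzeta N, monoid.mult = (*), one = 1, zero = 0, add = (+)\<rparr>"

definition ideal_ext :: "complex set \<Rightarrow> complex set \<Rightarrow> complex set" where
  "ideal_ext R I = {x. \<exists>(n::nat) a r. (\<forall>i<n. a i \<in> I \<and> r i \<in> R) \<and> x = (\<Sum>i<n. a i * r i)}"

(* F_2(beta): the subring of a characteristic 2 field generated by beta;
   it is a field since beta is algebraic *)
definition F2_adj :: "'b::field \<Rightarrow> 'b set" where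
  "F2_adj \<beta> = {x. \<exists>g :: int poly. x = poly (map_poly of_int g) \<beta>}"

definition F2_adj_ring :: "'b::field \<Rightarrow> 'b ring" where
  "F2_adj_ring \<beta> = \<lparr>carrier = F2_adj \<beta>, monoid.mult = (*), one = 1, zero = 0, add = (+)\<rparr>"

definition mult_order :: "'b::field \<Rightarrow> nat" where
  "mult_order x = (LEAST d. d > 0 \<and> x ^ d = 1)"

definition primitive_elem :: "'a::{finite,field} \<Rightarrow> bool" where
  "primitive_elem \<alpha> \<longleftrightarrow> (\<forall>x. x \<noteq> 0 \<longrightarrow> (\<exists>n::nat. x = \<alpha> ^ n))"

definition dlog :: "'a::{finite,field} \<Rightarrow> 'a \<Rightarrow> nat" where
  "dlog \<alpha> x = (LEAST n. \<alpha> ^ n = x)"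

definition slce :: "'a::{finite,field} \<Rightarrow> nat \<Rightarrow> nat" where
  "slce \<alpha> n = (if \<alpha> ^ n + 1 \<noteq> 0 \<and> \<not> (\<exists>y. y ^ 2 = \<alpha> ^ n + 1) then 1 else 0)"

definition slce_poly :: "'a::{finite,field} \<Rightarrow> 'b::comm_ring_1 poly" where
  "slce_poly \<alpha> = (\<Sum>n<card (UNIV :: 'a set) - 1. monom (of_nat (slce \<alpha> n)) n)"

definition hasse_deriv :: "nat \<Rightarrow> 'b::comm_ring_1 poly \<Rightarrow> 'b poly" where
  "hasse_deriv t p = (\<Sum>n\<in>{t..degree p}. monom (of_nat (n choose t) * coeff p n) (n - t))"

definition eta :: "'a::{finite,field} \<Rightarrow> real \<Rightarrow> 'a \<Rightarrow> complex" where
  "eta \<alpha> j x = (if x = 0 then 0 else exp (2 * pi * \<i> * of_real j * of_nat (dlog \<alpha> x)))"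

definition chi :: "'a::{finite,field} \<Rightarrow> complex \<Rightarrow> 'a \<Rightarrow> complex" where
  "chi \<alpha> z x = (if x = 0 then 0 else z ^ dlog \<alpha> x)"

definition Ksum :: "'a::{finite,field} \<Rightarrow> ('a \<Rightarrow> complex) \<Rightarrow> complex" where
  "Ksum \<alpha> \<psi> = (\<Sum>x\<in>UNIV. eta \<alpha> (1/2) x * \<psi> (1 - x))"

end

theory Submission
  imports Defs "HOL-Analysis.Complex_Transcendental"
begin


lemma pow_mod_T:
  fixes a :: "'c::monoid_mult"
  assumes "a ^ T = 1" shows "a ^ n = a ^ (n mod T)"
proof -
  have "a ^ n = a ^ (T * (n div T) + n mod T)" by simp
  also have "\<dots> = (a ^ T) ^ (n div T) * a ^ (n mod T)" by (simp only: power_add power_mult)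
  also have "\<dots> = a ^ (n mod T)" by (simp add: assms)
  finally show ?thesis .
qed

lemma fermat_field:
  fixes x :: "'a::{finite,field}"
  assumes "x \<noteq> 0" shows "x ^ (CARD('a) - 1) = 1"
proof -
  let ?U = "UNIV - {0::'a}"
  have cardU: "card ?U = CARD('a) - 1" by (simp add: card_Diff_singleton)
  have bij: "bij_betw (\<lambda>y. x * y) ?U ?U"
    using assms apply (auto simp: bij_betw_def inj_on_def image_def)
    subgoal for y by (rule bexI[of _ "inverse x * y"]) auto
    done
  have "prod (\<lambda>y. y) ?U = prod (\<lambda>y. x * y) ?U"
    using prod.reindex_bij_betw[OF bij, of "\<lambda>y. y"] by simp
  also have "\<dots> = x ^ card ?U * prod (\<lambda>y. y) ?U" by (simp add: prod.distrib)
  finally have "x ^ card ?U * prod (\<lambda>y. y) ?U = 1 * prod (\<lambda>y. y) ?U" by simp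
  moreover have "prod (\<lambda>y. y) ?U \<noteq> 0" by (simp add: prod_zero_iff)
  ultimately show ?thesis using cardU by simp
qed


locale ff =
  fixes \<alpha> :: "'a::{finite,field}" and T :: nat
  assumes prim: "primitive_elem \<alpha>" and T_def: "T = CARD('a) - 1"
    and q4: "CARD('a) mod 4 = 1"

context ff
begin

lemma T4: "4 dvd T" using q4 T_def by presburger
lemma Tpos: "T > 0"
proof -
  have "card {0::'a, 1} \<le> CARD('a)" by (rule card_mono) auto
  then have "CARD('a) \<ge> 2" by simp
  then show ?thesis using q4 T_def by presburger
qed

lemma alpha_nz: "\<alpha> \<noteq> 0"
proof
  assume a0: "\<alpha> = 0"
  have "UNIV \<subseteq> {0::'a, 1}"
  proof
    fix x :: 'a
    show "x \<in> {0,1}"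
    proof (cases "x = 0")
      case False
      then obtain n where "x = \<alpha> ^ n" using prim unfolding primitive_elem_def by blast
      then show ?thesis using a0 by (cases n) auto
    qed simp
  qed
  then have "CARD('a) \<le> 2" by (metis card.empty card_insert_if card_mono finite.emptyI finite.insertI insert_absorb2 le_SucI numeral_2_eq_2 one_le_numeral card_insert_le_m1 finite_UNIV)
  then show False using q4 Tpos T_def by presburger
qed

lemma alpha_T: "\<alpha> ^ T = 1" using fermat_field[OF alpha_nz] T_def by simp

lemma alpha_pow_mod: "\<alpha> ^ n = \<alpha> ^ (n mod T)" using pow_mod_T[OF alpha_T] .

lemma alpha_image: "(\<lambda>n. \<alpha> ^ n) ` {..<T} = UNIV - {0}"
proof
  show "(\<lambda>n. \<alpha> ^ n) ` {..<T} \<subseteq> UNIV - {0}" using alpha_nz by auto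
  show "UNIV - {0} \<subseteq> (\<lambda>n. \<alpha> ^ n) ` {..<T}"
  proof
    fix x assume "x \<in> UNIV - {0::'a}"
    then obtain n where "x = \<alpha> ^ n" using prim unfolding primitive_elem_def by blast
    then have "x = \<alpha> ^ (n mod T)" using alpha_pow_mod by simp
    moreover have "n mod T < T" using Tpos by simp
    ultimately show "x \<in> (\<lambda>n. \<alpha> ^ n) ` {..<T}" by blast
  qed
qed

lemma alpha_bij: "bij_betw (\<lambda>n. \<alpha> ^ n) {..<T} (UNIV - {0})"
proof -
  have "card ((\<lambda>n. \<alpha> ^ n) ` {..<T}) = card {..<T}"
    using alpha_image T_def by (simp add: card_Diff_singleton)
  then have "inj_on (\<lambda>n. \<alpha> ^ n) {..<T}" by (rule eq_card_imp_inj_on[rotated]) simp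
  then show ?thesis using alpha_image by (simp add: bij_betw_def)
qed

lemma alpha_pow_eq: "\<alpha> ^ n = \<alpha> ^ m \<longleftrightarrow> n mod T = m mod T"
proof
  assume "\<alpha> ^ n = \<alpha> ^ m"
  then have "\<alpha> ^ (n mod T) = \<alpha> ^ (m mod T)" using alpha_pow_mod by metis
  moreover have "n mod T \<in> {..<T}" "m mod T \<in> {..<T}" using Tpos by auto
  ultimately show "n mod T = m mod T" using alpha_bij unfolding bij_betw_def inj_on_def by blast
next
  assume "n mod T = m mod T" then show "\<alpha> ^ n = \<alpha> ^ m" using alpha_pow_mod by metis
qed

lemma dlog_pow: "dlog \<alpha> (\<alpha> ^ n) = n mod T"
  unfolding dlog_def
proof (rule Least_equality)
  show "\<alpha> ^ (n mod T) = \<alpha> ^ n" using alpha_pow_mod by metis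
  fix m assume "\<alpha> ^ m = \<alpha> ^ n"
  then have "m mod T = n mod T" using alpha_pow_eq by simp
  then show "n mod T \<le> m" by (metis mod_less_eq_dividend)
qed

lemma dlog_ex: "x \<noteq> 0 \<Longrightarrow> \<exists>n<T. x = \<alpha> ^ n"
  using alpha_image by auto

lemma pow_dlog: "x \<noteq> 0 \<Longrightarrow> \<alpha> ^ dlog \<alpha> x = x"
  using dlog_ex dlog_pow alpha_pow_mod by metis

lemma minus_one: "- 1 = \<alpha> ^ (T div 2)"
proof -
  let ?y = "\<alpha> ^ (T div 2)"
  have "?y * ?y = 1" using T4 alpha_T by (metis dvd_mult_div_cancel mult_2 power_add dvd_trans dvd_refl even_numeral dvd_def)
  then have "(?y - 1) * (?y + 1) = 0" by (simp add: algebra_simps)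
  moreover have "?y \<noteq> 1"
  proof
    assume "?y = 1"
    then have "\<alpha> ^ (T div 2) = \<alpha> ^ 0" by simp
    then have "(T div 2) mod T = 0 mod T" using alpha_pow_eq[of "T div 2" 0] by simp
    then show False using Tpos T4 by auto
  qed
  ultimately have "?y + 1 = 0" by simp
  then have "?y = - 1" by (simp add: eq_neg_iff_add_eq_0)
  then show ?thesis by simp
qed

lemma square_iff: "x \<noteq> 0 \<Longrightarrow> (\<exists>y. y ^ 2 = x) \<longleftrightarrow> even (dlog \<alpha> x)"
proof
  assume x: "x \<noteq> 0" and "\<exists>y. y ^ 2 = x"
  then obtain y where y: "y ^ 2 = x" by blast
  then have "y \<noteq> 0" using x by auto
  then obtain j where "y = \<alpha> ^ j" using dlog_ex by blast
  then have "x = \<alpha> ^ (j * 2)" using y by (simp add: power_mult)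
  then have "x = \<alpha> ^ (2 * j)" by (simp add: mult.commute)
  then have "dlog \<alpha> x = (2 * j) mod T" using dlog_pow by simp
  moreover have "even T" using T4 by (metis dvd_trans even_numeral)
  ultimately show "even (dlog \<alpha> x)" by (simp add: dvd_mod)
next
  assume x: "x \<noteq> 0" and "even (dlog \<alpha> x)"
  then obtain j where "dlog \<alpha> x = 2 * j" by blast
  then have "(\<alpha> ^ j) ^ 2 = x" using pow_dlog[OF x] by (simp add: power_mult[symmetric] mult.commute)
  then show "\<exists>y. y ^ 2 = x" by blast
qed

lemma dlog_mult: "x \<noteq> 0 \<Longrightarrow> y \<noteq> 0 \<Longrightarrow> dlog \<alpha> (x * y) = (dlog \<alpha> x + dlog \<alpha> y) mod T"
  by (metis dlog_pow pow_dlog power_add)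

end


lemma exp_quarter: "exp (2 * pi * \<i> * complex_of_real (1/4)) = \<i>"
proof -
  have "2 * pi * \<i> * complex_of_real (1/4) = \<i> * complex_of_real (pi / 2)" by simp
  then have "exp (2 * pi * \<i> * complex_of_real (1/4)) = cis (pi / 2)" by (simp only: cis_conv_exp)
  then show ?thesis by simp
qed

lemma exp_half: "exp (2 * pi * \<i> * complex_of_real (1/2)) = -1"
proof -
  have "2 * pi * \<i> * complex_of_real (1/2) = \<i> * complex_of_real pi" by simp
  then show ?thesis by (simp add: cis_conv_exp[symmetric])
qed

lemma exp_3quarter: "exp (2 * pi * \<i> * complex_of_real (3/4)) = - \<i>"
proof -
  have "2 * pi * \<i> * complex_of_real (3/4) = of_nat 3 * (2 * pi * \<i> * complex_of_real (1/4))" by simp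
  then have "exp (2 * pi * \<i> * complex_of_real (3/4)) = \<i> ^ 3"
    by (simp only: exp_of_nat_mult exp_quarter)
  then show ?thesis by (simp add: power3_eq_cube)
qed

context ff
begin

lemma eta_pow: "eta \<alpha> j (\<alpha> ^ n) = exp (2 * pi * \<i> * complex_of_real j) ^ (n mod T)"
proof -
  have "\<alpha> ^ n \<noteq> 0" using alpha_nz by simp
  moreover have "2 * pi * \<i> * complex_of_real j * of_nat (n mod T) = of_nat (n mod T) * (2 * pi * \<i> * complex_of_real j)"
    by simp
  ultimately show ?thesis unfolding eta_def dlog_pow by (simp only: if_False exp_of_nat_mult)
qed

lemma i_T: "\<i> ^ T = 1"
  using T4 by (metis dvd_def power_mult power_one i_squared power2_eq_square numeral_Bit0 mult_2 power_add
       power_minus1_even)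

lemma rho_pow: "eta \<alpha> (1/2) (\<alpha> ^ n) = (-1) ^ n"
proof -
  have "even T" using T4 by (metis dvd_trans even_numeral)
  then have "((-1::complex)) ^ T = 1" by simp
  then show ?thesis using eta_pow[of "1/2" n] exp_half pow_mod_T by metis
qed

lemma eta14_pow: "eta \<alpha> (1/4) (\<alpha> ^ n) = \<i> ^ n"
  using eta_pow[of "1/4" n] exp_quarter pow_mod_T[OF i_T] by metis

lemma eta34_pow: "eta \<alpha> (3/4) (\<alpha> ^ n) = (- \<i>) ^ n"
proof -
  have "(- \<i>) ^ T = 1" using i_T T4 by (metis power_minus_even dvd_trans even_numeral)
  then show ?thesis using eta_pow[of "3/4" n] exp_3quarter pow_mod_T by metis
qed

lemma chi_pow: "z ^ T = 1 \<Longrightarrow> chi \<alpha> z (\<alpha> ^ n) = z ^ n"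
proof -
  assume "z ^ T = 1"
  then have "z ^ (n mod T) = z ^ n" using pow_mod_T by metis
  moreover have "\<alpha> ^ n \<noteq> 0" using alpha_nz by simp
  ultimately show ?thesis unfolding chi_def dlog_pow by simp
qed

lemma rho_slce:
  assumes n: "n < T"
  shows "eta \<alpha> (1/2) (\<alpha> ^ n + 1) = 1 - 2 * of_nat (slce \<alpha> n) - (if n = T div 2 then 1 else 0)"
proof (cases "\<alpha> ^ n + 1 = 0")
  case True
  then have "\<alpha> ^ n = \<alpha> ^ (T div 2)" using minus_one by (simp add: add_eq_0_iff2)
  then have "n mod T = (T div 2) mod T" using alpha_pow_eq by simp
  then have "n = T div 2" using n Tpos by simp
  then show ?thesis using True by (simp add: eta_def slce_def)
next
  case False
  have ne: "n \<noteq> T div 2"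
  proof
    assume "n = T div 2"
    then have "\<alpha> ^ n = - 1" using minus_one by simp
    then have "\<alpha> ^ n + 1 = 0" by simp
    then show False using False by simp
  qed
  let ?u = "\<alpha> ^ n + 1"
  have rho: "eta \<alpha> (1/2) ?u = (-1) ^ dlog \<alpha> ?u"
    using rho_pow[of "dlog \<alpha> ?u"] pow_dlog[OF False] by simp
  show ?thesis
  proof (cases "even (dlog \<alpha> ?u)")
    case True
    then have "\<exists>y. y ^ 2 = ?u" using square_iff[OF False] by simp
    then show ?thesis using rho True ne by (simp add: slce_def)
  next
    case odd: False
    then have "\<not> (\<exists>y. y ^ 2 = ?u)" using square_iff[OF False] by simp
    then show ?thesis using rho odd ne False by (simp add: slce_def)
  qed
qed

lemma Ksum_formula:
  fixes \<psi> :: "'a \<Rightarrow> complex" and w :: complex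
  assumes psi0: "\<psi> 0 = 0" and psin: "\<And>n. \<psi> (\<alpha> ^ n) = w ^ n"
    and wT: "w ^ T = 1" and w1: "w \<noteq> 1"
  shows "Ksum \<alpha> \<psi> = - 2 * w ^ (T div 2) * (\<Sum>n<T. of_nat (slce \<alpha> n) * w ^ n) - 1"
proof -
  let ?c = "w ^ (T div 2)"
  let ?B = "\<Sum>n<T. of_nat (slce \<alpha> n) * w ^ n"
  let ?f = "\<lambda>z. eta \<alpha> (1/2) (z + 1) * \<psi> (- z)"
  have "Ksum \<alpha> \<psi> = (\<Sum>z\<in>UNIV. ?f z)"
    unfolding Ksum_def
    by (rule sum.reindex_bij_witness[of _ "\<lambda>z. z + 1" "\<lambda>x. x - 1"]) (auto simp: algebra_simps)
  also have "\<dots> = (\<Sum>z\<in>UNIV - {0}. ?f z)"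
    by (rule sum.mono_neutral_right) (auto simp: psi0)
  also have "\<dots> = (\<Sum>n<T. ?f (\<alpha> ^ n))"
    using sum.reindex_bij_betw[OF alpha_bij, of ?f] by simp
  also have "\<dots> = (\<Sum>n<T. ?c * ((1 - 2 * of_nat (slce \<alpha> n) - (if n = T div 2 then 1 else 0)) * w ^ n))"
  proof (rule sum.cong[OF refl])
    fix n assume "n \<in> {..<T}"
    then have n: "n < T" by simp
    have "- (\<alpha> ^ n) = \<alpha> ^ (T div 2 + n)" by (simp add: power_add flip: minus_one)
    then have "\<psi> (- (\<alpha> ^ n)) = w ^ (T div 2 + n)" using psin by metis
    then have "\<psi> (- (\<alpha> ^ n)) = ?c * w ^ n" by (simp add: power_add)
    then show "?f (\<alpha> ^ n) = ?c * ((1 - 2 * of_nat (slce \<alpha> n) - (if n = T div 2 then 1 else 0)) * w ^ n)"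
      using rho_slce[OF n] by simp
  qed
  also have "\<dots> = ?c * ((\<Sum>n<T. w ^ n) - 2 * ?B - (\<Sum>n<T. (if n = T div 2 then w ^ n else 0)))"
  proof -
    have "\<And>n. (1 - 2 * of_nat (slce \<alpha> n) - (if n = T div 2 then 1 else 0)) * w ^ n
       = w ^ n - 2 * (of_nat (slce \<alpha> n) * w ^ n) - (if n = T div 2 then w ^ n else 0)"
      by (simp add: algebra_simps)
    then have "(\<Sum>n<T. (1 - 2 * of_nat (slce \<alpha> n) - (if n = T div 2 then 1 else 0)) * w ^ n)
       = (\<Sum>n<T. w ^ n) - 2 * ?B - (\<Sum>n<T. (if n = T div 2 then w ^ n else 0))"
      by (simp only: sum_subtractf sum_distrib_left)
    then show ?thesis by (simp only: sum_distrib_left[symmetric])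
  qed
  also have "(\<Sum>n<T. w ^ n) = 0" using wT w1 by (simp add: sum_gp_strict)
  also have "(\<Sum>n<T. (if n = T div 2 then w ^ n else 0)) = ?c"
    using Tpos by (simp add: sum.delta)
  also have "?c * (0 - 2 * ?B - ?c) = - 2 * ?c * ?B - ?c * ?c" by (simp add: algebra_simps)
  also have "?c * ?c = 1"
  proof -
    have "T div 2 + T div 2 = T" using T4 by auto
    then show ?thesis using wT by (metis power_add)
  qed
  finally show ?thesis .
qed

end


lemma i4: "\<i> ^ 4 = 1" by (simp add: numeral_eq_Suc)

lemma i_pow_mod4: "\<i> ^ n = \<i> ^ (n mod 4)"
  using pow_mod_T[of \<i> 4 n] by (simp add: i4)

lemma mi_pow_mod4: "(- \<i>) ^ n = (- \<i>) ^ (n mod 4)"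
proof -
  have "(- \<i>) ^ 4 = 1" by (simp add: numeral_eq_Suc)
  then show ?thesis using pow_mod_T by metis
qed

lemma bracket:
  "2 - (1 - \<i>) * \<i> ^ n - (1 + \<i>) * (- \<i>) ^ n = (if n mod 4 \<in> {2,3} then 4 else 0)"
proof -
  have r: "n mod 4 < 4" by simp
  have c: "n mod 4 = 0 \<or> n mod 4 = 1 \<or> n mod 4 = 2 \<or> n mod 4 = 3" using r by linarith
  show ?thesis
    apply (subst i_pow_mod4, subst mi_pow_mod4)
    using c by (elim disjE) (simp_all add: power3_eq_cube algebra_simps)
qed

lemma aux8a: "(T + 1) mod 8 = (1::nat) \<Longrightarrow> (T div 2) mod 4 = 0" by presburger
lemma aux8b: "(T + 1) mod 4 = (1::nat) \<Longrightarrow> (T + 1) mod 8 \<noteq> 1 \<Longrightarrow> (T div 2) mod 4 = 2" by presburger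

context ff
begin

lemma card_T: "CARD('a) = T + 1" using T_def Tpos by simp


lemma four_A:
  fixes \<zeta> :: complex
  shows "2 * (\<Sum>n<T. of_nat (slce \<alpha> n) * \<zeta> ^ n)
     - (1 - \<i>) * (\<Sum>n<T. of_nat (slce \<alpha> n) * (\<i> * \<zeta>) ^ n)
     - (1 + \<i>) * (\<Sum>n<T. of_nat (slce \<alpha> n) * (- \<i> * \<zeta>) ^ n)
   = 4 * (\<Sum>n\<in>{n. n < T \<and> n mod 4 \<in> {2,3} \<and> slce \<alpha> n = 1}. \<zeta> ^ n)"
proof -
  have "2 * (\<Sum>n<T. of_nat (slce \<alpha> n) * \<zeta> ^ n)
     - (1 - \<i>) * (\<Sum>n<T. of_nat (slce \<alpha> n) * (\<i> * \<zeta>) ^ n)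
     - (1 + \<i>) * (\<Sum>n<T. of_nat (slce \<alpha> n) * (- \<i> * \<zeta>) ^ n)
     = (\<Sum>n<T. of_nat (slce \<alpha> n) * \<zeta> ^ n * (2 - (1 - \<i>) * \<i> ^ n - (1 + \<i>) * (- \<i>) ^ n))"
    apply (simp only: power_mult_distrib sum_distrib_left sum_subtractf[symmetric])
    apply (rule sum.cong[OF refl])
    apply (simp add: algebra_simps)
    done
  also have "\<dots> = (\<Sum>n<T. if n mod 4 \<in> {2,3} \<and> slce \<alpha> n = 1 then 4 * \<zeta> ^ n else 0)"
  proof (rule sum.cong[OF refl])
    fix n
    have "slce \<alpha> n = 0 \<or> slce \<alpha> n = 1" by (simp add: slce_def)
    then show "of_nat (slce \<alpha> n) * \<zeta> ^ n * (2 - (1 - \<i>) * \<i> ^ n - (1 + \<i>) * (- \<i>) ^ n)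
      = (if n mod 4 \<in> {2,3} \<and> slce \<alpha> n = 1 then 4 * \<zeta> ^ n else 0)"
      unfolding bracket by auto
  qed
  also have "\<dots> = (\<Sum>n\<in>{n. n < T \<and> n mod 4 \<in> {2,3} \<and> slce \<alpha> n = 1}. 4 * \<zeta> ^ n)"
    by (subst sum.inter_filter[symmetric]) (auto intro: sum.cong)
  also have "\<dots> = 4 * (\<Sum>n\<in>{n. n < T \<and> n mod 4 \<in> {2,3} \<and> slce \<alpha> n = 1}. \<zeta> ^ n)"
    by (simp add: sum_distrib_left)
  finally show ?thesis .
qed

lemma E_formula:
  fixes \<zeta> :: complex
  assumes zT: "\<zeta> ^ T = 1" and zh: "\<zeta> ^ (T div 2) = 1" and z1: "\<zeta> \<noteq> 1"
    and iz: "\<i> * \<zeta> \<noteq> 1" and miz: "- \<i> * \<zeta> \<noteq> 1"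
  shows "(if CARD('a) mod 8 = 1 then
       2 * Ksum \<alpha> (chi \<alpha> \<zeta>)
         - (1 - \<i>) * Ksum \<alpha> (\<lambda>x. eta \<alpha> (1/4) x * chi \<alpha> \<zeta> x)
         - (1 + \<i>) * Ksum \<alpha> (\<lambda>x. eta \<alpha> (3/4) x * chi \<alpha> \<zeta> x)
     else
       4 + 2 * Ksum \<alpha> (chi \<alpha> \<zeta>)
         + (1 - \<i>) * Ksum \<alpha> (\<lambda>x. eta \<alpha> (1/4) x * chi \<alpha> \<zeta> x)
         + (1 + \<i>) * Ksum \<alpha> (\<lambda>x. eta \<alpha> (3/4) x * chi \<alpha> \<zeta> x))
    = - 8 * (\<Sum>n\<in>{n. n < T \<and> n mod 4 \<in> {2,3} \<and> slce \<alpha> n = 1}. \<zeta> ^ n)"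
proof -
  define A where "A = (\<Sum>n\<in>{n. n < T \<and> n mod 4 \<in> {2,3} \<and> slce \<alpha> n = 1}. \<zeta> ^ n)"
  define B0 where "B0 = (\<Sum>n<T. of_nat (slce \<alpha> n) * \<zeta> ^ n)"
  define B1 where "B1 = (\<Sum>n<T. of_nat (slce \<alpha> n) * (\<i> * \<zeta>) ^ n)"
  define B3 where "B3 = (\<Sum>n<T. of_nat (slce \<alpha> n) * (- \<i> * \<zeta>) ^ n)"
  have h4: "2 * B0 - (1 - \<i>) * B1 - (1 + \<i>) * B3 = 4 * A"
    unfolding A_def B0_def B1_def B3_def by (rule four_A)
  define c where "c = \<i> ^ (T div 2)"
  have iT: "(\<i> * \<zeta>) ^ T = 1" using zT i_T by (simp add: power_mult_distrib)
  have miT: "(- \<i> * \<zeta>) ^ T = 1"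
  proof -
    have "(- \<i>) ^ T = 1" using i_T T4 by (metis power_minus_even dvd_trans even_numeral)
    then show ?thesis using zT by (simp only: power_mult_distrib) simp
  qed
  have p00: "chi \<alpha> \<zeta> 0 = 0" by (simp add: chi_def)
  have K0: "Ksum \<alpha> (chi \<alpha> \<zeta>) = - 2 * B0 - 1"
    using Ksum_formula[of "chi \<alpha> \<zeta>" \<zeta>, OF p00 chi_pow[OF zT] zT z1]
    unfolding B0_def zh by simp
  have w1: "(\<i> * \<zeta>) ^ (T div 2) = c"
    by (simp only: power_mult_distrib c_def zh) simp
  have psi1: "\<And>n. eta \<alpha> (1/4) (\<alpha> ^ n) * chi \<alpha> \<zeta> (\<alpha> ^ n) = (\<i> * \<zeta>) ^ n"
    using eta14_pow chi_pow[OF zT] by (simp only: power_mult_distrib)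
  have p10: "eta \<alpha> (1/4) 0 * chi \<alpha> \<zeta> 0 = 0" by (simp add: eta_def)
  have K1: "Ksum \<alpha> (\<lambda>x. eta \<alpha> (1/4) x * chi \<alpha> \<zeta> x) = - 2 * c * B1 - 1"
    using Ksum_formula[of "\<lambda>x. eta \<alpha> (1/4) x * chi \<alpha> \<zeta> x" "\<i> * \<zeta>", OF p10 psi1 iT iz]
    unfolding B1_def w1 .
  have cm: "(- \<i>) ^ (T div 2) = c"
  proof -
    have "even (T div 2)" using T4 by auto
    then show ?thesis unfolding c_def by (simp add: power_minus_even)
  qed
  have w3: "(- \<i> * \<zeta>) ^ (T div 2) = c"
    by (simp only: power_mult_distrib cm zh) simp
  have psi3: "\<And>n. eta \<alpha> (3/4) (\<alpha> ^ n) * chi \<alpha> \<zeta> (\<alpha> ^ n) = (- \<i> * \<zeta>) ^ n"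
    using eta34_pow chi_pow[OF zT] by (simp only: power_mult_distrib)
  have p30: "eta \<alpha> (3/4) 0 * chi \<alpha> \<zeta> 0 = 0" by (simp add: eta_def)
  have K3: "Ksum \<alpha> (\<lambda>x. eta \<alpha> (3/4) x * chi \<alpha> \<zeta> x) = - 2 * c * B3 - 1"
    using Ksum_formula[of "\<lambda>x. eta \<alpha> (3/4) x * chi \<alpha> \<zeta> x" "- \<i> * \<zeta>", OF p30 psi3 miT miz]
    unfolding B3_def w3 .
  show ?thesis
  proof (cases "CARD('a) mod 8 = 1")
    case True
    then have "(T div 2) mod 4 = 0" using aux8a card_T by simp
    moreover have "c = \<i> ^ ((T div 2) mod 4)" unfolding c_def by (rule i_pow_mod4)
    ultimately have "c = 1" by simp
    then have "2 * Ksum \<alpha> (chi \<alpha> \<zeta>)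
         - (1 - \<i>) * Ksum \<alpha> (\<lambda>x. eta \<alpha> (1/4) x * chi \<alpha> \<zeta> x)
         - (1 + \<i>) * Ksum \<alpha> (\<lambda>x. eta \<alpha> (3/4) x * chi \<alpha> \<zeta> x)
      = - 2 * (2 * B0 - (1 - \<i>) * B1 - (1 + \<i>) * B3)"
      unfolding K0 K1 K3 by (simp add: algebra_simps)
    then show ?thesis using True h4 unfolding A_def by simp
  next
    case False
    then have "(T div 2) mod 4 = 2" using aux8b card_T q4 by simp
    moreover have "c = \<i> ^ ((T div 2) mod 4)" unfolding c_def by (rule i_pow_mod4)
    ultimately have "c = -1" by simp
    then have "4 + 2 * Ksum \<alpha> (chi \<alpha> \<zeta>)
         + (1 - \<i>) * Ksum \<alpha> (\<lambda>x. eta \<alpha> (1/4) x * chi \<alpha> \<zeta> x)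
         + (1 + \<i>) * Ksum \<alpha> (\<lambda>x. eta \<alpha> (3/4) x * chi \<alpha> \<zeta> x)
      = - 2 * (2 * B0 - (1 - \<i>) * B1 - (1 + \<i>) * B3)"
      unfolding K0 K1 K3 by (simp add: algebra_simps)
    then show ?thesis using False h4 unfolding A_def by simp
  qed
qed

end


lemma mpi_add: "map_poly (of_int::int\<Rightarrow>'c::ring_1) (g + h) = map_poly of_int g + map_poly of_int h"
  by (rule poly_eqI) (simp add: coeff_map_poly)
lemma mpi_minus: "map_poly (of_int::int\<Rightarrow>'c::ring_1) (- g) = - map_poly of_int g"
  by (rule poly_eqI) (simp add: coeff_map_poly)
lemma mpi_mult: "map_poly (of_int::int\<Rightarrow>'c::comm_ring_1) (g * h) = map_poly of_int g * map_poly of_int h"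
  by (rule poly_eqI) (simp add: coeff_map_poly coeff_mult)
lemma mpi_const: "map_poly (of_int::int\<Rightarrow>'c::ring_1) [:a:] = [:of_int a:]"
  by (simp add: map_poly_pCons)
lemma mpi_monom: "map_poly (of_int::int\<Rightarrow>'c::ring_1) (monom 1 n) = monom 1 n"
  by (simp add: map_poly_monom)

lemma Zz_add: "x \<in> Zzeta N \<Longrightarrow> y \<in> Zzeta N \<Longrightarrow> x + y \<in> Zzeta N"
proof -
  assume "x \<in> Zzeta N" "y \<in> Zzeta N"
  then obtain g h where "x = poly (map_poly of_int g) (zeta N)" "y = poly (map_poly of_int h) (zeta N)"
    unfolding Zzeta_def by blast
  then have "x + y = poly (map_poly of_int (g + h)) (zeta N)" by (simp add: mpi_add)
  then show ?thesis unfolding Zzeta_def by blast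
qed
lemma Zz_mult: "x \<in> Zzeta N \<Longrightarrow> y \<in> Zzeta N \<Longrightarrow> x * y \<in> Zzeta N"
proof -
  assume "x \<in> Zzeta N" "y \<in> Zzeta N"
  then obtain g h where "x = poly (map_poly of_int g) (zeta N)" "y = poly (map_poly of_int h) (zeta N)"
    unfolding Zzeta_def by blast
  then have "x * y = poly (map_poly of_int (g * h)) (zeta N)" by (simp add: mpi_mult)
  then show ?thesis unfolding Zzeta_def by blast
qed
lemma Zz_uminus: "x \<in> Zzeta N \<Longrightarrow> - x \<in> Zzeta N"
proof -
  assume "x \<in> Zzeta N"
  then obtain g where "x = poly (map_poly of_int g) (zeta N)"
    unfolding Zzeta_def by blast
  then have "- x = poly (map_poly of_int (- g)) (zeta N)" by (simp add: mpi_minus)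
  then show ?thesis unfolding Zzeta_def by blast
qed
lemma Zz_diff: "x \<in> Zzeta N \<Longrightarrow> y \<in> Zzeta N \<Longrightarrow> x - y \<in> Zzeta N"
  using Zz_add Zz_uminus by (metis diff_conv_add_uminus)
lemma Zz_of_int: "of_int a \<in> Zzeta N"
  unfolding Zzeta_def by (auto intro!: exI[of _ "[:a:]"] simp: mpi_const)
lemma Zz_one: "1 \<in> Zzeta N" using Zz_of_int[of 1] by simp
lemma Zz_zero: "0 \<in> Zzeta N" using Zz_of_int[of 0] by simp
lemma Zz_zeta_pow: "zeta N ^ n \<in> Zzeta N"
  unfolding Zzeta_def by (auto intro!: exI[of _ "monom 1 n"] simp: mpi_monom poly_monom)
lemma Zz_pow: "x \<in> Zzeta N \<Longrightarrow> x ^ n \<in> Zzeta N"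
  by (induction n) (auto simp: Zz_one Zz_mult)
lemma Zz_sum: "(\<And>i. i \<in> S \<Longrightarrow> f i \<in> Zzeta N) \<Longrightarrow> sum f S \<in> Zzeta N"
  by (induction S rule: infinite_finite_induct) (auto simp: Zz_zero Zz_add)

lemma F2_add: "x \<in> F2_adj b \<Longrightarrow> y \<in> F2_adj b \<Longrightarrow> x + y \<in> F2_adj b"
proof -
  assume "x \<in> F2_adj b" "y \<in> F2_adj b"
  then obtain g h where "x = poly (map_poly of_int g) b" "y = poly (map_poly of_int h) b"
    unfolding F2_adj_def by blast
  then have "x + y = poly (map_poly of_int (g + h)) b" by (simp add: mpi_add)
  then show ?thesis unfolding F2_adj_def by blast
qed
lemma F2_pow: "b ^ n \<in> F2_adj b"
  unfolding F2_adj_def by (auto intro!: exI[of _ "monom 1 n"] simp: mpi_monom poly_monom)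
lemma F2_zero: "0 \<in> F2_adj b"
  unfolding F2_adj_def by (auto intro!: exI[of _ 0])
lemma F2_sum: "F2_adj b \<supseteq> {sum (\<lambda>n. b ^ n) S | S. True}"
proof -
  have "sum (\<lambda>n. b ^ n) S \<in> F2_adj b" for S
    by (induction S rule: infinite_finite_induct) (auto simp: F2_zero F2_add F2_pow)
  then show ?thesis by auto
qed

lemma odd_choose2: "odd (n choose 2) \<longleftrightarrow> n mod 4 \<in> {2,3}"
proof (induction n)
  case 0 then show ?case by (simp add: binomial_eq_0)
next
  case (Suc n)
  have "Suc n choose 2 = n + (n choose 2)"
    using binomial_Suc_Suc[of n 1] by (simp add: numeral_2_eq_2)
  then show ?case using Suc.IH by simp presburger
qed

lemma char2_of_nat:
  assumes "CHAR('b::field) = 2"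
  shows "(of_nat m :: 'b) = (if even m then 0 else 1)"
proof -
  have two: "(of_nat 2 :: 'b) = 0" using of_nat_CHAR[where 'a='b] assms by simp
  have "(of_nat m :: 'b) = of_nat (2 * (m div 2) + m mod 2)" by simp
  also have "\<dots> = of_nat 2 * of_nat (m div 2) + of_nat (m mod 2)" by (simp only: of_nat_add of_nat_mult)
  also have "\<dots> = of_nat (m mod 2)" using two by simp
  finally show ?thesis by (cases "even m") (auto simp: odd_iff_mod_2_eq_one)
qed

lemma coeff_slce_poly:
  "coeff (slce_poly \<alpha> :: 'b::comm_ring_1 poly) n =
     (if n < CARD('a::{finite,field}) - 1 then of_nat (slce (\<alpha>::'a) n) else 0)"
  unfolding slce_poly_def by (simp add: coeff_sum coeff_monom)

lemma hasse_eval: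
  fixes \<alpha> :: "'a::{finite,field}" and \<beta> :: "'b::field"
  assumes c2: "CHAR('b) = 2" and T_def: "T = CARD('a) - 1"
  shows "\<beta> ^ 2 * poly (hasse_deriv 2 (slce_poly \<alpha> :: 'b poly)) \<beta>
     = (\<Sum>n\<in>{n. n < T \<and> n mod 4 \<in> {2,3} \<and> slce \<alpha> n = 1}. \<beta> ^ n)"
proof -
  let ?p = "slce_poly \<alpha> :: 'b poly"
  have cf: "coeff ?p n = (if n < T then of_nat (slce \<alpha> n) else 0)" for n
    using coeff_slce_poly[of \<alpha> n] T_def by simp
  have deg: "degree ?p \<le> T - 1" by (rule degree_le) (auto simp: cf)
  have "poly (hasse_deriv 2 ?p) \<beta> = (\<Sum>n\<in>{2..degree ?p}. of_nat (n choose 2) * coeff ?p n * \<beta> ^ (n - 2))"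
    unfolding hasse_deriv_def by (simp add: poly_sum poly_monom)
  also have "\<dots> = (\<Sum>n\<in>{2..<T}. of_nat (n choose 2) * coeff ?p n * \<beta> ^ (n - 2))"
  proof (rule sum.mono_neutral_left)
    show "{2..degree ?p} \<subseteq> {2..<T}" using deg by auto
    show "\<forall>i\<in>{2..<T} - {2..degree ?p}. of_nat (i choose 2) * coeff ?p i * \<beta> ^ (i - 2) = 0"
      by (auto simp: coeff_eq_0)
  qed simp
  finally have "\<beta> ^ 2 * poly (hasse_deriv 2 ?p) \<beta> = (\<Sum>n\<in>{2..<T}. of_nat (n choose 2) * coeff ?p n * (\<beta> ^ 2 * \<beta> ^ (n - 2)))"
    by (simp add: sum_distrib_left algebra_simps)
  also have "\<dots> = (\<Sum>n\<in>{2..<T}. if odd ((n choose 2) * slce \<alpha> n) then \<beta> ^ n else 0)"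
  proof (rule sum.cong[OF refl])
    fix n assume n: "n \<in> {2..<T}"
    then have n2: "2 \<le> n" by simp
    then have "2 + (n - 2) = n" by linarith
    then have "\<beta> ^ 2 * \<beta> ^ (n - 2) = \<beta> ^ n" by (metis power_add)
    moreover have "of_nat (n choose 2) * coeff ?p n = (of_nat ((n choose 2) * slce \<alpha> n) :: 'b)"
      using n cf by simp
    ultimately have "of_nat (n choose 2) * coeff ?p n * (\<beta> ^ 2 * \<beta> ^ (n - 2)) =
        of_nat ((n choose 2) * slce \<alpha> n) * \<beta> ^ n" by (simp only:)
    then show "of_nat (n choose 2) * coeff ?p n * (\<beta> ^ 2 * \<beta> ^ (n - 2)) =
        (if odd ((n choose 2) * slce \<alpha> n) then \<beta> ^ n else 0)"
      unfolding char2_of_nat[OF c2, of "(n choose 2) * slce \<alpha> n"] by simp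
  qed
  also have "\<dots> = (\<Sum>n\<in>{n\<in>{2..<T}. odd ((n choose 2) * slce \<alpha> n)}. \<beta> ^ n)"
    by (rule sum.inter_filter[symmetric]) simp
  also have "{n\<in>{2..<T}. odd ((n choose 2) * slce \<alpha> n)} = {n. n < T \<and> n mod 4 \<in> {2,3} \<and> slce \<alpha> n = 1}"
  proof -
    have s01: "slce \<alpha> n = 0 \<or> slce \<alpha> n = 1" for n by (simp add: slce_def)
    have m2: "n mod 4 \<in> {2,3} \<Longrightarrow> 2 \<le> n" for n::nat by auto
    have "(n \<in> {2..<T} \<and> odd ((n choose 2) * slce \<alpha> n)) \<longleftrightarrow> (n < T \<and> n mod 4 \<in> {2,3} \<and> slce \<alpha> n = 1)" for n
      using s01[of n] m2[of n] odd_choose2[of n] by (auto simp: even_mult_iff)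
    then show ?thesis by blast
  qed
  finally show ?thesis .
qed


lemma k_facts:
  fixes \<beta> :: "'b::field"
  assumes c2: "CHAR('b) = 2" and bT: "\<beta> ^ T = 1" and Tp: "T > 0" and kd: "k = mult_order \<beta>"
  shows "k > 0" "\<beta> ^ k = 1" "\<And>d. 0 < d \<Longrightarrow> d < k \<Longrightarrow> \<beta> ^ d \<noteq> 1" "k dvd T" "odd k"
proof -
  have ex: "\<exists>d. d > 0 \<and> \<beta> ^ d = 1" using bT Tp by blast
  have kk: "k > 0 \<and> \<beta> ^ k = 1" using LeastI_ex[OF ex] unfolding kd mult_order_def .
  then show "k > 0" "\<beta> ^ k = 1" by auto
  show mn: "\<And>d. 0 < d \<Longrightarrow> d < k \<Longrightarrow> \<beta> ^ d \<noteq> 1"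
    using not_less_Least unfolding kd mult_order_def by blast
  have "\<beta> ^ (T mod k) = 1" using pow_mod_T[of \<beta> k T] kk bT by simp
  then have "T mod k = 0" using mn[of "T mod k"] kk by (meson mod_less_divisor neq0_conv)
  then show "k dvd T" by auto
  show "odd k"
  proof
    assume "even k"
    then obtain j where j: "k = 2 * j" by blast
    then have j0: "0 < j" "j < k" using kk by auto
    let ?y = "\<beta> ^ j"
    have yy: "?y * ?y = 1" using kk j by (simp add: power_add[symmetric] mult_2)
    have two: "(2 :: 'b) = 0" using of_nat_CHAR[where 'a='b] c2 by simp
    have "(?y + 1) * (?y + 1) = ?y * ?y + 2 * ?y + 1" by (simp add: algebra_simps)
    also have "\<dots> = 2 * (?y + 1)" using yy by (simp add: algebra_simps)
    also have "\<dots> = 0" using two by simp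
    finally have "?y + 1 = 0" by simp
    then have "?y = - 1" by (simp add: eq_neg_iff_add_eq_0)
    also have "- 1 = (1::'b)"
    proof -
      have "(1::'b) + 1 = 0" using two by simp
      then have "(1::'b) = - 1" by (simp only: eq_neg_iff_add_eq_0)
      then show ?thesis by simp
    qed
    finally show False using mn[OF j0] by simp
  qed
qed

lemma odd_root_i:
  fixes z :: complex
  assumes "z ^ k = 1" "odd k"
  shows "\<i> * z \<noteq> 1" "- \<i> * z \<noteq> 1"
proof -
  obtain t where t: "k = 2 * t + 1" using assms(2) oddE by blast
  have s: "(-1::complex) ^ t = 1 \<or> (-1::complex) ^ t = -1" by (cases "even t") auto
  have p1: "\<i> ^ k = \<i> * (-1) ^ t" unfolding t by (simp add: power_mult power_add)
  have p2: "(- \<i>) ^ k = - \<i> * (-1) ^ t" unfolding t by (simp add: power_mult power_add)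
  show "\<i> * z \<noteq> 1"
  proof
    assume h: "\<i> * z = 1"
    have "z = (- \<i> * \<i>) * z" by simp
    also have "\<dots> = - \<i> * (\<i> * z)" by (simp only: mult.assoc)
    finally have "z = - \<i>" using h by simp
    then have "(- \<i>) ^ k = 1" using assms by simp
    then show False using p2 s by (auto simp: complex_eq_iff)
  qed
  show "- \<i> * z \<noteq> 1"
  proof
    assume h: "- \<i> * z = 1"
    have eq: "z = \<i> * (- \<i> * z)" by simp
    then have "z = \<i> * 1" unfolding h .
    then have "z = \<i>" by simp
    then have "\<i> ^ k = 1" using assms by simp
    then show False using p1 s by (auto simp: complex_eq_iff)
  qed
qed

lemma zeta_pow_eq:
  assumes "k > 0"
  shows "zeta k ^ j = exp (2 * of_real pi * \<i> * of_nat j / of_nat k)"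
proof -
  have "zeta k ^ j = exp (of_nat j * (2 * pi * \<i> / of_nat k))" unfolding zeta_def by (rule exp_of_nat_mult[symmetric])
  also have "of_nat j * (2 * pi * \<i> / of_nat k) = 2 * of_real pi * \<i> * of_nat j / (of_nat k :: complex)" by simp
  finally show ?thesis .
qed

lemma root_in_Zz:
  assumes "z ^ k = 1" "k > 0"
  shows "z \<in> Zzeta k"
proof -
  have "z \<in> {z::complex. z ^ k = 1}" using assms by simp
  then obtain j where "z = exp (2 * of_real pi * \<i> * of_nat j / of_nat k)"
    using complex_roots_unity[of k] assms by auto
  then have "z = zeta k ^ j" using zeta_pow_eq assms by simp
  then show ?thesis using Zz_zeta_pow by simp
qed

lemma zeta4k:
  assumes "odd k"
  shows "zeta (4 * k) = zeta k ^ (((k + 1) div 2)^2) * \<i> ^ k"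
proof -
  obtain t where t: "k = 2 * t + 1" using assms oddE by blast
  define a where "a = ((k + 1) div 2)^2"
  have a: "a = (t + 1)^2" unfolding a_def t by simp
  have kp: "k > 0" using t by simp
  have ar: "4 * a + k * k = 1 + (4 * k) * (t + 1)" unfolding a t by (simp add: algebra_simps power2_eq_square)
  have eqa: "2 * of_real pi * \<i> * of_nat (4 * a) / of_nat (4 * k) = 2 * of_real pi * \<i> * of_nat a / (of_nat k :: complex)"
    using kp by (simp add: field_simps)
  have e1: "zeta k ^ a = exp (2 * of_real pi * \<i> * of_nat (4 * a) / of_nat (4 * k))"
    unfolding eqa by (rule zeta_pow_eq[OF kp])
  have "\<i> ^ k = exp (of_nat k * (2 * pi * \<i> * complex_of_real (1/4)))"
    by (simp only: exp_of_nat_mult exp_quarter)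
  also have "of_nat k * (2 * pi * \<i> * complex_of_real (1/4)) = 2 * of_real pi * \<i> * of_nat (k * k) / of_nat (4 * k)"
    using kp by (simp add: field_simps)
  finally have e2: "\<i> ^ k = exp (2 * of_real pi * \<i> * of_nat (k * k) / of_nat (4 * k))" .
  have "zeta k ^ a * \<i> ^ k = exp (2 * of_real pi * \<i> * of_nat (4 * a + k * k) / of_nat (4 * k))"
  proof -
    have sp: "2 * of_real pi * \<i> * of_nat (4 * a + k * k) / of_nat (4 * k) = 2 * of_real pi * \<i> * of_nat (4 * a) / of_nat (4 * k) + 2 * of_real pi * \<i> * of_nat (k * k) / (of_nat (4 * k)::complex)"
      by (simp only: of_nat_add distrib_left add_divide_distrib)
    show ?thesis unfolding sp exp_add e1 e2 ..
  qed
  also have "\<dots> = exp (2 * of_real pi * \<i> * of_nat 1 / of_nat (4 * k))"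
  proof (subst complex_root_unity_eq)
    show "1 \<le> 4 * k" using kp by simp
    show "(4 * a + k * k) mod (4 * k) = 1 mod (4 * k)" unfolding ar mod_mult_self2 ..
  qed
  also have "\<dots> = zeta (4 * k)" unfolding zeta_def by simp
  finally show ?thesis unfolding a_def by simp
qed

lemma Zz4k_decomp:
  assumes k: "odd k" and r: "r \<in> Zzeta (4 * k)"
  shows "\<exists>u v. u \<in> Zzeta k \<and> v \<in> Zzeta k \<and> r = u + \<i> * v"
proof -
  obtain t where t: "k = 2 * t + 1" using k oddE by blast
  define c where "c = zeta k ^ (((k + 1) div 2)^2) * (-1) ^ t"
  have cZ: "c \<in> Zzeta k" unfolding c_def
    by (intro Zz_mult Zz_zeta_pow Zz_pow) (use Zz_of_int[of "-1" k] in simp)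
  have ik: "\<i> ^ k = \<i> * (-1)^t" unfolding t by (simp add: power_mult power_add)
  have z: "zeta (4 * k) = \<i> * c" unfolding c_def zeta4k[OF k] ik by simp
  obtain g where g: "r = poly (map_poly of_int g) (zeta (4 * k))" using r unfolding Zzeta_def by blast
  have "\<exists>u v. u \<in> Zzeta k \<and> v \<in> Zzeta k \<and> poly (map_poly of_int g) (zeta (4 * k)) = u + \<i> * v"
  proof (induction g)
    case 0
    show ?case by (rule exI[of _ 0], rule exI[of _ 0]) (simp add: Zz_zero)
  next
    case (pCons a p)
    then obtain u v where uv: "u \<in> Zzeta k" "v \<in> Zzeta k"
      "poly (map_poly of_int p) (zeta (4 * k)) = u + \<i> * v" by blast
    have "poly (map_poly of_int (pCons a p)) (zeta (4 * k)) = of_int a + \<i> * c * (u + \<i> * v)"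
      using uv(3) z by (simp add: map_poly_pCons)
    also have "\<dots> = (of_int a - c * v) + \<i> * (c * u)" by (simp add: algebra_simps)
    finally show ?case using uv cZ by (intro exI conjI) (auto intro: Zz_diff Zz_of_int Zz_mult)
  qed
  then show ?thesis using g by simp
qed


lemma P_facts:
  assumes pr: "primeideal P (Zzeta_ring k)"
  shows "P \<subseteq> Zzeta k" "0 \<in> P" "\<And>x y. x \<in> P \<Longrightarrow> y \<in> P \<Longrightarrow> x + y \<in> P"
    "\<And>x y. x \<in> P \<Longrightarrow> y \<in> Zzeta k \<Longrightarrow> x * y \<in> P"
    "\<And>x y. x \<in> Zzeta k \<Longrightarrow> y \<in> Zzeta k \<Longrightarrow> x * y \<in> P \<Longrightarrow> x \<in> P \<or> y \<in> P"
proof -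
  interpret primeideal P "Zzeta_ring k" by (rule pr)
  have as: "additive_subgroup P (Zzeta_ring k)" by (rule ideal.axioms(1)[OF is_ideal])
  show "P \<subseteq> Zzeta k" using Icarr by (auto simp: Zzeta_ring_def)
  show "0 \<in> P" using additive_subgroup.zero_closed[OF as] by (simp add: Zzeta_ring_def)
  show "\<And>x y. x \<in> P \<Longrightarrow> y \<in> P \<Longrightarrow> x + y \<in> P"
    using additive_subgroup.a_closed[OF as] by (simp add: Zzeta_ring_def)
  show "\<And>x y. x \<in> P \<Longrightarrow> y \<in> Zzeta k \<Longrightarrow> x * y \<in> P"
    using I_r_closed by (simp add: Zzeta_ring_def)
  show "\<And>x y. x \<in> Zzeta k \<Longrightarrow> y \<in> Zzeta k \<Longrightarrow> x * y \<in> P \<Longrightarrow> x \<in> P \<or> y \<in> P"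
    using I_prime by (simp add: Zzeta_ring_def)
qed

lemma ideal_main:
  assumes pr: "primeideal P (Zzeta_ring k)" and k: "odd k" and A: "A \<in> Zzeta k"
  shows "(- 8 * A \<in> ideal_ext (Zzeta (4 * k)) ((\<lambda>x. 8 * x) ` P)) \<longleftrightarrow> A \<in> P"
proof
  note PF = P_facts[OF pr]
  assume "- 8 * A \<in> ideal_ext (Zzeta (4 * k)) ((\<lambda>x. 8 * x) ` P)"
  then have "\<exists>(n::nat) a r. (\<forall>i<n. a i \<in> (\<lambda>x. 8 * x) ` P \<and> r i \<in> Zzeta (4 * k)) \<and> - 8 * A = (\<Sum>i<n. a i * r i)"
    unfolding ideal_ext_def by simp
  then obtain n :: nat and a r where ar: "\<forall>i<n. a i \<in> (\<lambda>x. 8 * x) ` P \<and> r i \<in> Zzeta (4 * k)"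
    and s: "- 8 * A = (\<Sum>i<n. a i * r i)" by blast
  define p where "p i = a i / 8" for i
  have pP: "\<forall>i<n. p i \<in> P \<and> a i = 8 * p i" using ar unfolding p_def by auto
  have "- 8 * A = (\<Sum>i<n. 8 * (p i * r i))" unfolding s using pP by (intro sum.cong) auto
  also have "\<dots> = 8 * (\<Sum>i<n. p i * r i)" by (simp add: sum_distrib_left)
  finally have "- A = (\<Sum>i<n. p i * r i)" by simp
  then have "A = - (\<Sum>i<n. p i * r i)" by (metis minus_minus)
  then have Asum: "A = (\<Sum>i<n. p i * (- r i))" by (simp add: sum_negf)
  have claim: "\<And>m. m \<le> n \<Longrightarrow> \<exists>x y. x \<in> P \<and> y \<in> P \<and> (\<Sum>i<m. p i * (- r i)) = x + \<i> * y"
  proof -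
    fix m assume "m \<le> n"
    then show "\<exists>x y. x \<in> P \<and> y \<in> P \<and> (\<Sum>i<m. p i * (- r i)) = x + \<i> * y"
    proof (induction m)
      case 0 then show ?case using PF(2) by (intro exI[of _ 0]) simp
    next
      case (Suc m)
      then obtain x y where xy: "x \<in> P" "y \<in> P" "(\<Sum>i<m. p i * (- r i)) = x + \<i> * y" by auto
      have mn: "m < n" using Suc by simp
      then have "- r m \<in> Zzeta (4 * k)" using ar Zz_uminus by blast
      then obtain u v where uv: "u \<in> Zzeta k" "v \<in> Zzeta k" "- r m = u + \<i> * v"
        using Zz4k_decomp[OF k] by blast
      have pm: "p m \<in> P" using pP mn by blast
      have rm: "p m * (- r m) = p m * (u + \<i> * v)" by (simp only: uv(3))
      have "(\<Sum>i<Suc m. p i * (- r i)) = (\<Sum>i<m. p i * (- r i)) + p m * (- r m)" by simp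
      also have "\<dots> = (x + p m * u) + \<i> * (y + p m * v)"
        unfolding xy(3) rm by (simp add: algebra_simps)
      finally have "(\<Sum>i<Suc m. p i * (- r i)) = (x + p m * u) + \<i> * (y + p m * v)" .
      moreover have "x + p m * u \<in> P" "y + p m * v \<in> P" using PF xy pm uv by auto
      ultimately show ?case by blast
    qed
  qed
  then obtain x y where xy: "x \<in> P" "y \<in> P" "A = x + \<i> * y"
    using Asum by blast
  define w where "w = A - x"
  have xZ: "x \<in> Zzeta k" using xy(1) PF(1) by blast
  have wZ: "w \<in> Zzeta k" unfolding w_def by (rule Zz_diff[OF A xZ])
  have "w * w = y * (- y)" unfolding w_def using xy(3) by (simp add: algebra_simps)
  moreover have "- y \<in> Zzeta k" using xy PF(1) Zz_uminus by blast
  ultimately have "w * w \<in> P" using PF(4)[OF xy(2)] by metis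
  then have "w \<in> P" using PF(5)[OF wZ wZ] by blast
  then show "A \<in> P" using PF(3)[OF xy(1)] unfolding w_def by force
next
  assume "A \<in> P"
  have m1: "- 1 \<in> Zzeta (4 * k)" using Zz_of_int[of "-1" "4 * k"] by simp
  show "- 8 * A \<in> ideal_ext (Zzeta (4 * k)) ((\<lambda>x. 8 * x) ` P)"
    unfolding ideal_ext_def
    apply (rule CollectI, rule exI[of _ 1], rule exI[of _ "\<lambda>_. 8 * A"], rule exI[of _ "\<lambda>_. - 1"])
    using \<open>A \<in> P\<close> m1 by auto
qed


lemma iso_main:
  fixes \<beta> :: "'b::field" and \<phi> :: "'b \<Rightarrow> complex set"
  assumes pr: "primeideal P (Zzeta_ring k)" and two: "2 \<in> P" and c2: "CHAR('b) = 2"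
    and iso: "\<phi> \<in> ring_iso (F2_adj_ring \<beta>) (Zzeta_ring k Quot P)"
    and pb: "\<phi> \<beta> = P +>\<^bsub>Zzeta_ring k\<^esub> \<zeta>" and zZ: "\<zeta> \<in> Zzeta k"
  shows "\<And>N. finite N \<Longrightarrow> ((\<Sum>n\<in>N. \<beta> ^ n) = 0 \<longleftrightarrow> (\<Sum>n\<in>N. \<zeta> ^ n) \<in> P)"
    and "\<zeta> = 1 \<Longrightarrow> \<beta> = 1"
proof -
  interpret primeideal P "Zzeta_ring k" by (rule pr)
  let ?R = "Zzeta_ring k"
  let ?F = "F2_adj_ring \<beta>"
  let ?Q = "Zzeta_ring k Quot P"
  have hom: "\<phi> \<in> ring_hom ?F ?Q" using iso by (simp add: ring_iso_def)
  have inj: "inj_on \<phi> (F2_adj \<beta>)" using iso by (simp add: ring_iso_def bij_betw_def F2_adj_ring_def)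
  have rh: "(+>\<^bsub>?R\<^esub>) P \<in> ring_hom ?R ?Q" by (rule rcos_ring_hom)
  have cF: "carrier ?F = F2_adj \<beta>" "\<And>x y. x \<otimes>\<^bsub>?F\<^esub> y = x * y" "\<And>x y. x \<oplus>\<^bsub>?F\<^esub> y = x + y" "\<one>\<^bsub>?F\<^esub> = 1"
    by (simp_all add: F2_adj_ring_def)
  have cR: "carrier ?R = Zzeta k" "\<And>x y. x \<otimes>\<^bsub>?R\<^esub> y = x * y" "\<And>x y. x \<oplus>\<^bsub>?R\<^esub> y = x + y" "\<one>\<^bsub>?R\<^esub> = 1"
    by (simp_all add: Zzeta_ring_def)
  have bF: "\<beta> \<in> F2_adj \<beta>" using F2_pow[of \<beta> 1] by simp
  have one: "\<phi> 1 = P +>\<^bsub>?R\<^esub> 1"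
    using ring_hom_one[OF hom] ring_hom_one[OF rh] cF(4) cR(4) by simp
  have phi_pow: "\<phi> (\<beta> ^ n) = P +>\<^bsub>?R\<^esub> (\<zeta> ^ n)" for n
  proof (induction n)
    case 0 then show ?case using one by simp
  next
    case (Suc n)
    have "\<phi> (\<beta> ^ Suc n) = \<phi> (\<beta> \<otimes>\<^bsub>?F\<^esub> \<beta> ^ n)" using cF(2) by simp
    also have "\<dots> = \<phi> \<beta> \<otimes>\<^bsub>?Q\<^esub> \<phi> (\<beta> ^ n)"
      using ring_hom_mult[OF hom, of \<beta> "\<beta> ^ n"] bF F2_pow[of \<beta> n] cF(1) by simp
    also have "\<dots> = (P +>\<^bsub>?R\<^esub> \<zeta>) \<otimes>\<^bsub>?Q\<^esub> (P +>\<^bsub>?R\<^esub> (\<zeta> ^ n))" using pb Suc by simp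
    also have "\<dots> = P +>\<^bsub>?R\<^esub> (\<zeta> \<otimes>\<^bsub>?R\<^esub> \<zeta> ^ n)"
      using ring_hom_mult[OF rh, of \<zeta> "\<zeta> ^ n"] zZ Zz_pow cR(1) by simp
    finally show ?case using cR(2) by simp
  qed
  have two': "(1::'b) + 1 = 0" using of_nat_CHAR[where 'a='b] c2 by simp
  have zero: "\<phi> 0 = P"
  proof -
    have oF: "1 \<in> F2_adj \<beta>" using F2_pow[of \<beta> 0] by simp
    have "\<phi> 0 = \<phi> (1 \<oplus>\<^bsub>?F\<^esub> 1)" using two' cF(3) by simp
    also have "\<dots> = \<phi> 1 \<oplus>\<^bsub>?Q\<^esub> \<phi> 1" using ring_hom_add[OF hom, of 1 1] oF cF(1) by simp
    also have "\<dots> = P +>\<^bsub>?R\<^esub> (1 \<oplus>\<^bsub>?R\<^esub> 1)"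
      using ring_hom_add[OF rh, of 1 1] one Zz_one cR(1) by simp
    also have "\<dots> = P +>\<^bsub>?R\<^esub> 2" using cR(3) by simp
    also have "\<dots> = P" by (rule a_rcos_zero[OF is_ideal two])
    finally show ?thesis .
  qed
  have P0: "0 \<in> P" using P_facts(2)[OF pr] .
  have phi_sum: "finite N \<Longrightarrow> \<phi> (\<Sum>n\<in>N. \<beta> ^ n) = P +>\<^bsub>?R\<^esub> (\<Sum>n\<in>N. \<zeta> ^ n)" for N
  proof (induction N rule: finite_induct)
    case empty
    then show ?case using zero a_rcos_zero[OF is_ideal P0] by simp
  next
    case (insert m N)
    have SF: "(\<Sum>n\<in>N. \<beta> ^ n) \<in> F2_adj \<beta>" using F2_sum by blast
    have SR: "(\<Sum>n\<in>N. \<zeta> ^ n) \<in> Zzeta k" by (rule Zz_sum) (rule Zz_pow[OF zZ])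
    have "\<phi> (\<Sum>n\<in>insert m N. \<beta> ^ n) = \<phi> (\<beta> ^ m \<oplus>\<^bsub>?F\<^esub> (\<Sum>n\<in>N. \<beta> ^ n))"
      using insert cF(3) by simp
    also have "\<dots> = \<phi> (\<beta> ^ m) \<oplus>\<^bsub>?Q\<^esub> \<phi> (\<Sum>n\<in>N. \<beta> ^ n)"
      using ring_hom_add[OF hom, of "\<beta> ^ m" "\<Sum>n\<in>N. \<beta> ^ n"] SF F2_pow[of \<beta> m] cF(1) by simp
    also have "\<dots> = (P +>\<^bsub>?R\<^esub> \<zeta> ^ m) \<oplus>\<^bsub>?Q\<^esub> (P +>\<^bsub>?R\<^esub> (\<Sum>n\<in>N. \<zeta> ^ n))"
      using phi_pow insert by simp
    also have "\<dots> = P +>\<^bsub>?R\<^esub> (\<zeta> ^ m \<oplus>\<^bsub>?R\<^esub> (\<Sum>n\<in>N. \<zeta> ^ n))"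
      using ring_hom_add[OF rh, of "\<zeta> ^ m" "\<Sum>n\<in>N. \<zeta> ^ n"] SR Zz_pow[OF zZ] cR(1) by simp
    finally show ?case using insert cR(3) by simp
  qed
  show "\<And>N. finite N \<Longrightarrow> ((\<Sum>n\<in>N. \<beta> ^ n) = 0 \<longleftrightarrow> (\<Sum>n\<in>N. \<zeta> ^ n) \<in> P)"
  proof -
    fix N :: "nat set" assume fN: "finite N"
    have SF: "(\<Sum>n\<in>N. \<beta> ^ n) \<in> F2_adj \<beta>" using F2_sum by blast
    have SR: "(\<Sum>n\<in>N. \<zeta> ^ n) \<in> Zzeta k" by (rule Zz_sum) (rule Zz_pow[OF zZ])
    have "(\<Sum>n\<in>N. \<beta> ^ n) = 0 \<longleftrightarrow> \<phi> (\<Sum>n\<in>N. \<beta> ^ n) = \<phi> 0"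
      using inj SF F2_zero unfolding inj_on_def by metis
    also have "\<dots> \<longleftrightarrow> P +>\<^bsub>?R\<^esub> (\<Sum>n\<in>N. \<zeta> ^ n) = P" using phi_sum[OF fN] zero by simp
    also have "\<dots> \<longleftrightarrow> (\<Sum>n\<in>N. \<zeta> ^ n) \<in> P"
    proof
      assume h: "P +>\<^bsub>?R\<^esub> (\<Sum>n\<in>N. \<zeta> ^ n) = P"
      have "(\<Sum>n\<in>N. \<zeta> ^ n) \<in> P +>\<^bsub>?R\<^esub> (\<Sum>n\<in>N. \<zeta> ^ n)"
        unfolding a_r_coset_def r_coset_def using P0 by (auto simp: Zzeta_ring_def intro!: bexI[of _ 0])
      then show "(\<Sum>n\<in>N. \<zeta> ^ n) \<in> P" using h by simp
    next
      assume "(\<Sum>n\<in>N. \<zeta> ^ n) \<in> P"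
      then show "P +>\<^bsub>?R\<^esub> (\<Sum>n\<in>N. \<zeta> ^ n) = P" by (rule a_rcos_zero[OF is_ideal])
    qed
    finally show "(\<Sum>n\<in>N. \<beta> ^ n) = 0 \<longleftrightarrow> (\<Sum>n\<in>N. \<zeta> ^ n) \<in> P" .
  qed
  show "\<zeta> = 1 \<Longrightarrow> \<beta> = 1"
  proof -
    assume "\<zeta> = 1"
    then have "\<phi> (\<beta> ^ 1) = \<phi> (\<beta> ^ 0)" using phi_pow[of 1] phi_pow[of 0] by simp
    then show "\<beta> = 1" using inj F2_pow[of \<beta> 1] F2_pow[of \<beta> 0] unfolding inj_on_def by simp
  qed
qed

theorem mainTheorem4:
  fixes \<alpha> :: "'a::{finite,field}" and \<beta> :: "'b::field"
    and p m k :: nat and P :: "complex set" and \<phi> :: "'b \<Rightarrow> complex set" and \<zeta> :: complex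
  assumes p_prime: "prime p" and p_odd: "odd p" and m_pos: "m \<ge> 1"
    and card: "card (UNIV :: 'a set) = p ^ m"
    and prim: "primitive_elem \<alpha>"
    and char2: "CHAR('b) = 2"
    and beta_T: "\<beta> ^ (card (UNIV :: 'a set) - 1) = 1"
    and k_def: "k = mult_order \<beta>" and k_gt: "k > 1"
    and P_prime: "primeideal P (Zzeta_ring k)" and two_P: "2 \<in> P"
    and phi_iso: "\<phi> \<in> ring_iso (F2_adj_ring \<beta>) (Zzeta_ring k Quot P)"
    and zeta_root: "\<zeta> ^ k = 1"
    and phi_beta: "\<phi> \<beta> = P +>\<^bsub>Zzeta_ring k\<^esub> \<zeta>"
    and q1mod4: "card (UNIV :: 'a set) mod 4 = 1"
  shows "poly (hasse_deriv 2 (slce_poly \<alpha> :: 'b poly)) \<beta> = 0 \<longleftrightarrow>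
    (if card (UNIV :: 'a set) mod 8 = 1 then
       2 * Ksum \<alpha> (chi \<alpha> \<zeta>)
         - (1 - \<i>) * Ksum \<alpha> (\<lambda>x. eta \<alpha> (1/4) x * chi \<alpha> \<zeta> x)
         - (1 + \<i>) * Ksum \<alpha> (\<lambda>x. eta \<alpha> (3/4) x * chi \<alpha> \<zeta> x)
       \<in> ideal_ext (Zzeta (4 * k)) ((\<lambda>x. 8 * x) ` P)
     else
       4 + 2 * Ksum \<alpha> (chi \<alpha> \<zeta>)
         + (1 - \<i>) * Ksum \<alpha> (\<lambda>x. eta \<alpha> (1/4) x * chi \<alpha> \<zeta> x)
         + (1 + \<i>) * Ksum \<alpha> (\<lambda>x. eta \<alpha> (3/4) x * chi \<alpha> \<zeta> x)
       \<in> ideal_ext (Zzeta (4 * k)) ((\<lambda>x. 8 * x) ` P))"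
proof -
  define T where "T = card (UNIV :: 'a set) - 1"
  interpret ff \<alpha> T using prim T_def q1mod4 by unfold_locales
  have Tp: "T > 0" by (rule Tpos)
  have bT: "\<beta> ^ T = 1" using beta_T unfolding T_def .
  note kf = k_facts[OF char2 bT Tp k_def]
  have kpos: "k > 0" by (rule kf(1))
  have zZ: "\<zeta> \<in> Zzeta k" by (rule root_in_Zz[OF zeta_root kpos])
  note iso = iso_main[OF P_prime two_P char2 phi_iso phi_beta zZ]
  have mo1: "mult_order (1::'b) = 1" unfolding mult_order_def by (rule Least_equality) auto
  have z1: "\<zeta> \<noteq> 1"
  proof
    assume "\<zeta> = 1"
    then have "\<beta> = 1" by (rule iso(2))
    then show False using k_def k_gt mo1 by simp
  qed
  note izs = odd_root_i[OF zeta_root kf(5)]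
  obtain m where m: "T = k * m" using kf(4) by blast
  have zT: "\<zeta> ^ T = 1" unfolding m by (simp add: power_mult zeta_root)
  have "even T" using T4 by (metis dvd_trans even_numeral)
  then have "even m" using kf(5) m by (simp add: even_mult_iff)
  then have "T div 2 = k * (m div 2)" using m by auto
  then have zh: "\<zeta> ^ (T div 2) = 1" by (simp add: power_mult zeta_root)
  define N where "N = {n. n < T \<and> n mod 4 \<in> {2,3} \<and> slce \<alpha> n = 1}"
  define A where "A = (\<Sum>n\<in>N. \<zeta> ^ n)"
  have fN: "finite N" unfolding N_def by simp
  have AZ: "A \<in> Zzeta k" unfolding A_def by (rule Zz_sum) (rule Zz_pow[OF zZ])
  have Ef: "(if card (UNIV :: 'a set) mod 8 = 1 then
       2 * Ksum \<alpha> (chi \<alpha> \<zeta>)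
         - (1 - \<i>) * Ksum \<alpha> (\<lambda>x. eta \<alpha> (1/4) x * chi \<alpha> \<zeta> x)
         - (1 + \<i>) * Ksum \<alpha> (\<lambda>x. eta \<alpha> (3/4) x * chi \<alpha> \<zeta> x)
     else
       4 + 2 * Ksum \<alpha> (chi \<alpha> \<zeta>)
         + (1 - \<i>) * Ksum \<alpha> (\<lambda>x. eta \<alpha> (1/4) x * chi \<alpha> \<zeta> x)
         + (1 + \<i>) * Ksum \<alpha> (\<lambda>x. eta \<alpha> (3/4) x * chi \<alpha> \<zeta> x)) = - 8 * A"
    unfolding A_def N_def by (rule E_formula[OF zT zh z1 izs])
  have bnz: "\<beta> \<noteq> 0" using bT Tp by (metis power_0_left zero_neq_one not_gr0)
  have "poly (hasse_deriv 2 (slce_poly \<alpha> :: 'b poly)) \<beta> = 0 \<longleftrightarrow>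
        \<beta> ^ 2 * poly (hasse_deriv 2 (slce_poly \<alpha> :: 'b poly)) \<beta> = 0" using bnz by simp
  also have "\<dots> \<longleftrightarrow> (\<Sum>n\<in>N. \<beta> ^ n) = 0"
    unfolding N_def using hasse_eval[OF char2 T_def, of \<beta> \<alpha>] by simp
  also have "\<dots> \<longleftrightarrow> A \<in> P" unfolding A_def by (rule iso(1)[OF fN])
  also have "\<dots> \<longleftrightarrow> - 8 * A \<in> ideal_ext (Zzeta (4 * k)) ((\<lambda>x. 8 * x) ` P)"
    by (rule ideal_main[OF P_prime kf(5) AZ, symmetric])
  finally show ?thesis using Ef by (cases "card (UNIV :: 'a set) mod 8 = 1") simp_all
qed


end
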